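(* Let $G$ be a graph, $q\in\mathcal Q(G)$, $F$ a graph and $\varphi\in\mathsf{Hom}(F,G)$. For each $n\ge1$ let $T_n$ be the graph whose vertices are the pairs $(x,i)$ with $x\in V_G$ and $i$ a function from $\{A\subseteq V_G: x\in A\}$ to $\{0,1,2,\dots\}$ satisfying $i(A)<n^{q(A)}$ for all such $A$, with an edge from $(x,i)$ to $(y,j)$ iff $(x,y)\in E_G$ and $i(A)=j(A)$ for all $A$ with $\{x,y\}\subseteq A\subseteq V_G$. Let $\pi_n:T_n\to G$ be $\pi_n(x,i)=x$ and let $\hom_\varphi(F,T_n)$ be the number of homomorphisms $\psi:F\to T_n$ with $\pi_n\circ\psi=\varphi$. Then \[ \lim_{n\to\infty}\log_n\hom_\varphi(F,T_n)=\sum_{A\subseteq V_G} q(A)\cdot\mathsf{CC}\big(F|_{\varphi^{-1}(A)}\big). \]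
   Context: Graphs are finite directed graphs $G=(V_G,E_G)$ with $V_G$ nonempty finite and $E_G\subseteq V_G\times V_G$. Homomorphisms are vertex maps sending edges to edges; $\mathsf{Hom}(F,G)$ is their set. $F|_B$ is the induced subgraph on $B$ and $\mathsf{CC}$ the number of connected components ignoring edge directions, with $\mathsf{CC}(F|_\emptyset)=0$. $\mathcal Q(G)$ is the set of functions $q:\wp(V_G)\to\mathbb R$ with $q(\emptyset)=0$, $q(A)\ge0$ for all $A$, and $\sum_{A\subseteq V_G}q(A)\,\mathsf{CC}(G|_A)=1$. *)

theory Defs
  imports "HOL-Analysis.Analysis"
begin

definition is_graph :: "'a set \<Rightarrow> ('a \<times> 'a) set \<Rightarrow> bool" where
  "is_graph V E \<longleftrightarrow> finite V \<and> V \<noteq> {} \<and> E \<subseteq> V \<times> V"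

definition homs :: "'b set \<Rightarrow> ('b \<times> 'b) set \<Rightarrow> 'a set \<Rightarrow> ('a \<times> 'a) set \<Rightarrow> ('b \<Rightarrow> 'a) set" where
  "homs VF EF VG EG = {f \<in> VF \<rightarrow>\<^sub>E VG. \<forall>(u,v) \<in> EF. (f u, f v) \<in> EG}"

text \<open>Number of connected components (ignoring directions) of the subgraph of (V,E)
  induced on B; it is 0 for B empty.\<close>
definition CC :: "('a \<times> 'a) set \<Rightarrow> 'a set \<Rightarrow> nat" where
  "CC E B = card (B // (((E \<inter> (B \<times> B)) \<union> (E \<inter> (B \<times> B))\<inverse>)\<^sup>*))"

definition Qset :: "'a set \<Rightarrow> ('a \<times> 'a) set \<Rightarrow> ('a set \<Rightarrow> real) set" where
  "Qset V E = {q. q {} = 0 \<and> (\<forall>A \<subseteq> V. q A \<ge> 0)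
      \<and> (\<Sum>A\<in>Pow V. q A * real (CC E A)) = 1}"

definition TV :: "'a set \<Rightarrow> ('a set \<Rightarrow> real) \<Rightarrow> nat \<Rightarrow> ('a \<times> ('a set \<Rightarrow> nat)) set" where
  "TV V q n = {(x, i). x \<in> V \<and> i \<in> extensional {A. A \<subseteq> V \<and> x \<in> A}
      \<and> (\<forall>A. A \<subseteq> V \<and> x \<in> A \<longrightarrow> real (i A) < real n powr q A)}"

definition TE :: "'a set \<Rightarrow> ('a \<times> 'a) set \<Rightarrow> ('a set \<Rightarrow> real) \<Rightarrow> nat
    \<Rightarrow> (('a \<times> ('a set \<Rightarrow> nat)) \<times> ('a \<times> ('a set \<Rightarrow> nat))) set" where
  "TE V E q n = {((x, i), (y, j)). (x, i) \<in> TV V q n \<and> (y, j) \<in> TV V q n \<and> (x, y) \<in> E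
      \<and> (\<forall>A. {x, y} \<subseteq> A \<and> A \<subseteq> V \<longrightarrow> i A = j A)}"

definition hom_over :: "'b set \<Rightarrow> ('b \<times> 'b) set \<Rightarrow> 'a set \<Rightarrow> ('a \<times> 'a) set
    \<Rightarrow> ('a set \<Rightarrow> real) \<Rightarrow> ('b \<Rightarrow> 'a) \<Rightarrow> nat \<Rightarrow> nat" where
  "hom_over VF EF V E q \<phi> n =
     card {\<psi> \<in> homs VF EF (TV V q n) (TE V E q n). \<forall>v \<in> VF. fst (\<psi> v) = \<phi> v}"

end

theory Submission
  imports Defs
begin

definition Rel :: "('b \<times> 'b) set \<Rightarrow> 'b set \<Rightarrow> ('b \<times> 'b) set" where
  "Rel E B = (((E \<inter> (B \<times> B)) \<union> (E \<inter> (B \<times> B))\<inverse>)\<^sup>*)"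

definition Kset :: "nat \<Rightarrow> real \<Rightarrow> nat set" where
  "Kset n x = {k. real k < real n powr x}"

lemma CC_Rel: "CC E B = card (B // Rel E B)"
  unfolding CC_def Rel_def by simp

lemma rel_sub:
  assumes "(x, y) \<in> Rel E B" "x \<in> B" shows "y \<in> B"
  using assms(1,2) unfolding Rel_def
  by (induction rule: rtrancl_induct) auto

lemma rel_equiv: "equiv UNIV (Rel E B)"
proof -
  let ?S = "(E \<inter> (B \<times> B)) \<union> (E \<inter> (B \<times> B))\<inverse>"
  have "sym ?S" by (auto simp: sym_def)
  then have "sym (?S\<^sup>*)" by (rule sym_rtrancl)
  then show ?thesis unfolding Rel_def equiv_def
    by (auto simp: refl_on_def trans_rtrancl)
qed

lemma TE_same:
  assumes "(a, b) \<in> TE V E q n" "fst a \<in> A" "fst b \<in> A" "A \<subseteq> V"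
  shows "snd a A = snd b A"
  using assms by (cases a; cases b) (auto simp: TE_def)

lemma rel_invariant:
  assumes psi: "\<psi> \<in> homs VF EF (TV VG q n) (TE VG EG q n)"
    and fst: "\<forall>v\<in>VF. fst (\<psi> v) = \<phi> v"
    and A: "A \<subseteq> VG"
    and uv: "(u, v) \<in> Rel EF (\<phi> -` A \<inter> VF)"
  shows "snd (\<psi> u) A = snd (\<psi> v) A"
  using uv unfolding Rel_def
proof (induction rule: rtrancl_induct)
  case base
  then show ?case by simp
next
  case (step y z)
  from step(2) have "snd (\<psi> y) A = snd (\<psi> z) A"
  proof
    assume yz: "(y, z) \<in> EF \<inter> (\<phi> -` A \<inter> VF) \<times> (\<phi> -` A \<inter> VF)"
    then have "(\<psi> y, \<psi> z) \<in> TE VG EG q n" using psi unfolding homs_def by auto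
    then show ?thesis using TE_same[of "\<psi> y" "\<psi> z"] yz fst A by auto
  next
    assume yz: "(y, z) \<in> (EF \<inter> (\<phi> -` A \<inter> VF) \<times> (\<phi> -` A \<inter> VF))\<inverse>"
    then have "(\<psi> z, \<psi> y) \<in> TE VG EG q n" using psi unfolding homs_def by auto
    then show ?thesis using TE_same[of "\<psi> z" "\<psi> y"] yz fst A by auto
  qed
  then show ?case using step by simp
qed

lemma finite_quot: "finite B \<Longrightarrow> finite (B // r)"
  unfolding quotient_def by auto

lemma TV_bound: "a \<in> TV V q n \<Longrightarrow> A \<subseteq> V \<Longrightarrow> fst a \<in> A \<Longrightarrow> real (snd a A) < real n powr q A"
  by (cases a) (auto simp: TV_def)

lemma TV_ext: "a \<in> TV V q n \<Longrightarrow> \<not> (A \<subseteq> V \<and> fst a \<in> A) \<Longrightarrow> snd a A = undefined"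
  by (cases a) (auto simp: TV_def extensional_def)

lemma TV_intro: "x \<in> V \<Longrightarrow> (\<And>A. \<not> (A \<subseteq> V \<and> x \<in> A) \<Longrightarrow> i A = undefined)
   \<Longrightarrow> (\<And>A. A \<subseteq> V \<Longrightarrow> x \<in> A \<Longrightarrow> real (i A) < real n powr q A) \<Longrightarrow> (x, i) \<in> TV V q n"
  by (auto simp: TV_def extensional_def)

lemma TE_intro: "a \<in> TV V q n \<Longrightarrow> b \<in> TV V q n \<Longrightarrow> (fst a, fst b) \<in> E
  \<Longrightarrow> (\<And>A. fst a \<in> A \<Longrightarrow> fst b \<in> A \<Longrightarrow> A \<subseteq> V \<Longrightarrow> snd a A = snd b A) \<Longrightarrow> (a, b) \<in> TE V E q n"
  by (cases a; cases b) (auto simp: TE_def)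

lemma count:
  assumes phi: "\<phi> \<in> homs VF EF VG EG" and fin: "finite VG" "finite VF" and EFs: "EF \<subseteq> VF \<times> VF"
  shows "hom_over VF EF VG EG q \<phi> n =
     (\<Prod>A\<in>Pow VG. card (Kset n (q A)) ^ CC EF (\<phi> -` A \<inter> VF))"
proof -
  define B where "B A = \<phi> -` A \<inter> VF" for A
  define R where "R A = Rel EF (B A)" for A
  define H where "H = {\<psi> \<in> homs VF EF (TV VG q n) (TE VG EG q n). \<forall>v \<in> VF. fst (\<psi> v) = \<phi> v}"
  define T where "T = (\<Pi>\<^sub>E A\<in>Pow VG. \<Pi>\<^sub>E C\<in>B A // R A. Kset n (q A))"
  define enc where "enc \<psi> = (\<lambda>A\<in>Pow VG. \<lambda>C\<in>B A // R A. snd (\<psi> (SOME v. v \<in> C)) A)" for \<psi> :: "'a \<Rightarrow> 'b \<times> ('b set \<Rightarrow> nat)"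
  define dec where "dec g = (\<lambda>v\<in>VF. (\<phi> v, \<lambda>A. if A \<subseteq> VG \<and> \<phi> v \<in> A then g A (R A `` {v}) else undefined))"
    for g :: "'b set \<Rightarrow> 'a set \<Rightarrow> nat"
  have phiV: "\<phi> v \<in> VG" if "v \<in> VF" for v using phi that unfolding homs_def by auto
  have cls: "\<exists>x\<in>B A. C = R A `` {x}" if "C \<in> B A // R A" for A C
    using that by (auto elim!: quotientE)
  have some: "(SOME v. v \<in> C) \<in> B A \<and> R A `` {SOME v. v \<in> C} = C" if C: "C \<in> B A // R A" for A C
  proof -
    obtain x where x: "x \<in> B A" "C = R A `` {x}" using cls[OF C] by blast
    define w where "w = (SOME v. v \<in> C)"
    have "x \<in> C" using x unfolding R_def Rel_def by auto
    then have w: "w \<in> C" unfolding w_def by (rule someI)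
    then have xw: "(x, w) \<in> R A" using x(2) by simp
    have wB: "w \<in> B A" using rel_sub[OF xw[unfolded R_def] x(1)] .
    have eq: "R A `` {x} = R A `` {w}" unfolding R_def
      by (rule equiv_class_eq[OF rel_equiv xw[unfolded R_def]])
    have "w \<in> B A \<and> R A `` {w} = C" using wB eq x(2) by simp
    then show ?thesis unfolding w_def .
  qed
  have "bij_betw enc H T"
  proof (rule bij_betw_byWitness[where f'=dec])
    show "\<forall>\<psi>\<in>H. dec (enc \<psi>) = \<psi>"
    proof
      fix \<psi> assume "\<psi> \<in> H"
      then have psi: "\<psi> \<in> homs VF EF (TV VG q n) (TE VG EG q n)" and fs: "\<forall>v \<in> VF. fst (\<psi> v) = \<phi> v"
        unfolding H_def by auto
      have psiE: "\<psi> \<in> VF \<rightarrow>\<^sub>E TV VG q n" using psi unfolding homs_def by blast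
      show "dec (enc \<psi>) = \<psi>"
      proof
        fix v
        show "dec (enc \<psi>) v = \<psi> v"
        proof (cases "v \<in> VF")
          case False
          have "dec (enc \<psi>) v = undefined" using False unfolding dec_def by simp
          moreover have "\<psi> v = undefined" using psiE False by (rule PiE_arb)
          ultimately show ?thesis by simp
        next
          case True
          have tv: "\<psi> v \<in> TV VG q n" using psiE True by blast
          have fv: "fst (\<psi> v) = \<phi> v" using fs True by blast
          have lam: "(\<lambda>A. if A \<subseteq> VG \<and> \<phi> v \<in> A then enc \<psi> A (R A `` {v}) else undefined) = snd (\<psi> v)"
          proof
            fix A
            show "(if A \<subseteq> VG \<and> \<phi> v \<in> A then enc \<psi> A (R A `` {v}) else undefined) = snd (\<psi> v) A"
            proof (cases "A \<subseteq> VG \<and> \<phi> v \<in> A")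
              case True2: True
              have vB: "v \<in> B A" using True True2 unfolding B_def by auto
              have q: "R A `` {v} \<in> B A // R A" using vB by (rule quotientI)
              define w where "w = (SOME w. w \<in> R A `` {v})"
              have "v \<in> R A `` {v}" unfolding R_def Rel_def by simp
              then have "w \<in> R A `` {v}" unfolding w_def by (rule someI)
              then have vw: "(v, w) \<in> R A" by simp
              have "snd (\<psi> v) A = snd (\<psi> w) A"
                using rel_invariant[OF psi fs, of A v w] True2 vw unfolding R_def B_def by blast
              moreover have "enc \<psi> A (R A `` {v}) = snd (\<psi> w) A"
                using True2 q unfolding enc_def w_def by simp
              ultimately show ?thesis using True2 by simp
            next
              case False
              then show ?thesis using TV_ext[OF tv, of A] fv by auto
            qed
          qed
          have "dec (enc \<psi>) v = (\<phi> v, \<lambda>A. if A \<subseteq> VG \<and> \<phi> v \<in> A then enc \<psi> A (R A `` {v}) else undefined)"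
            using True unfolding dec_def by simp
          also have "\<dots> = (fst (\<psi> v), snd (\<psi> v))" using lam fv by simp
          finally show ?thesis by simp
        qed
      qed
    qed
    show "\<forall>g\<in>T. enc (dec g) = g"
    proof
      fix g assume g: "g \<in> T"
      show "enc (dec g) = g"
      proof
        fix A show "enc (dec g) A = g A"
        proof (cases "A \<in> Pow VG")
          case False
          have "enc (dec g) A = undefined" using False unfolding enc_def by simp
          moreover have "g A = undefined" using g False unfolding T_def by (rule PiE_arb)
          ultimately show ?thesis by simp
        next
          case True
          have gA: "g A \<in> B A // R A \<rightarrow>\<^sub>E Kset n (q A)" using g True unfolding T_def by blast
          show ?thesis
          proof
            fix C show "enc (dec g) A C = g A C"
            proof (cases "C \<in> B A // R A")
              case False
              have "enc (dec g) A C = undefined" using False True unfolding enc_def by simp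
              moreover have "g A C = undefined" using gA False by (rule PiE_arb)
              ultimately show ?thesis by simp
            next
              case True2: True
              define w where "w = (SOME v. v \<in> C)"
              have s: "w \<in> B A" "R A `` {w} = C" using some[OF True2] unfolding w_def by auto
              have wV: "w \<in> VF" "\<phi> w \<in> A" using s(1) unfolding B_def by auto
              have "enc (dec g) A C = snd (dec g w) A" using True True2 unfolding enc_def w_def by simp
              also have "\<dots> = g A (R A `` {w})" using wV True unfolding dec_def by simp
              also have "\<dots> = g A C" using s(2) by simp
              finally show ?thesis .
            qed
          qed
        qed
      qed
    qed
    show "enc ` H \<subseteq> T"
    proof
      fix g assume "g \<in> enc ` H"
      then obtain \<psi> where "\<psi> \<in> H" and g: "g = enc \<psi>" by auto
      then have psi: "\<psi> \<in> homs VF EF (TV VG q n) (TE VG EG q n)" and fs: "\<forall>v \<in> VF. fst (\<psi> v) = \<phi> v"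
        unfolding H_def by auto
      have psiE: "\<psi> \<in> VF \<rightarrow>\<^sub>E TV VG q n" using psi unfolding homs_def by blast
      have "snd (\<psi> (SOME v. v \<in> C)) A \<in> Kset n (q A)" if A: "A \<in> Pow VG" and C: "C \<in> B A // R A" for A C
      proof -
        define w where "w = (SOME v. v \<in> C)"
        have w: "w \<in> B A" using some[OF C] unfolding w_def by auto
        then have wV: "w \<in> VF" "\<phi> w \<in> A" unfolding B_def by auto
        have tw: "\<psi> w \<in> TV VG q n" using psiE wV by blast
        have "fst (\<psi> w) \<in> A" using fs wV by simp
        then have "real (snd (\<psi> w) A) < real n powr q A" using TV_bound[OF tw] A by simp
        then show ?thesis unfolding Kset_def w_def by simp
      qed
      then show "g \<in> T" unfolding g enc_def T_def by auto
    qed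
    show "dec ` T \<subseteq> H"
    proof
      fix \<psi> assume "\<psi> \<in> dec ` T"
      then obtain g where g: "g \<in> T" and psi: "\<psi> = dec g" by auto
      have dv: "dec g v = (\<phi> v, \<lambda>A. if A \<subseteq> VG \<and> \<phi> v \<in> A then g A (R A `` {v}) else undefined)"
        if "v \<in> VF" for v using that unfolding dec_def by simp
      have tv: "dec g v \<in> TV VG q n" if v: "v \<in> VF" for v
      proof -
        have bnd: "real (g A (R A `` {v})) < real n powr q A" if "A \<subseteq> VG" "\<phi> v \<in> A" for A
        proof -
          have "R A `` {v} \<in> B A // R A" using v that by (intro quotientI) (auto simp: B_def)
          moreover have "g A \<in> B A // R A \<rightarrow>\<^sub>E Kset n (q A)" using g that unfolding T_def by auto
          ultimately have "g A (R A `` {v}) \<in> Kset n (q A)" by blast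
          then show ?thesis unfolding Kset_def by simp
        qed
        show ?thesis unfolding dv[OF v]
          by (rule TV_intro) (use phiV[OF v] bnd in auto)
      qed
      have "dec g \<in> homs VF EF (TV VG q n) (TE VG EG q n)"
        unfolding homs_def
      proof (intro CollectI conjI ballI)
        show "dec g \<in> VF \<rightarrow>\<^sub>E TV VG q n" using tv unfolding dec_def by auto
      next
        fix e assume e: "e \<in> EF"
        obtain u v where uv: "e = (u, v)" by (cases e)
        have u: "u \<in> VF" and v: "v \<in> VF" and ph: "(\<phi> u, \<phi> v) \<in> EG" using phi e uv EFs unfolding homs_def by auto
        have eq: "R A `` {u} = R A `` {v}" if "A \<subseteq> VG" "\<phi> u \<in> A" "\<phi> v \<in> A" for A
        proof -
          have "(u, v) \<in> R A" using e uv u v that unfolding R_def Rel_def B_def by auto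
          then show ?thesis unfolding R_def by (rule equiv_class_eq[OF rel_equiv])
        qed
        have "(dec g u, dec g v) \<in> TE VG EG q n"
        proof (rule TE_intro[OF tv[OF u] tv[OF v]])
          show "(fst (dec g u), fst (dec g v)) \<in> EG" using ph dv[OF u] dv[OF v] by simp
          fix A assume "fst (dec g u) \<in> A" "fst (dec g v) \<in> A" "A \<subseteq> VG"
          then show "snd (dec g u) A = snd (dec g v) A" using dv[OF u] dv[OF v] eq[of A] by simp
        qed
        then show "case e of (u, v) \<Rightarrow> (dec g u, dec g v) \<in> TE VG EG q n" using uv by simp
      qed
      moreover have "\<forall>v \<in> VF. fst (dec g v) = \<phi> v" using dv by simp
      ultimately show "\<psi> \<in> H" unfolding H_def psi by blast
    qed
  qed
  then have "card H = card T" by (rule bij_betw_same_card)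
  also have "card T = (\<Prod>A\<in>Pow VG. card (Kset n (q A)) ^ card (B A // R A))"
    unfolding T_def using fin
    by (simp add: card_PiE finite_quot B_def)
  finally show ?thesis unfolding hom_over_def H_def[symmetric] CC_Rel R_def B_def by simp
qed

lemma Kset_bounds:
  assumes n: "n \<ge> 1" and x: "x \<ge> 0"
  shows "real n powr x \<le> real (card (Kset n x)) \<and> real (card (Kset n x)) \<le> 2 * real n powr x"
proof -
  define y where "y = real n powr x"
  have y1: "y \<ge> 1" unfolding y_def using n x by (intro ge_one_powr_ge_zero) auto
  have "Kset n x = {..< nat \<lceil>y\<rceil>}"
  proof
    show "Kset n x \<subseteq> {..<nat \<lceil>y\<rceil>}"
    proof
      fix k assume "k \<in> Kset n x"
      then have "real k < y" unfolding Kset_def y_def by auto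
      then have "int k < \<lceil>y\<rceil>" using less_ceiling_iff[of "int k" y] by simp
      then show "k \<in> {..<nat \<lceil>y\<rceil>}" by auto
    qed
    show "{..<nat \<lceil>y\<rceil>} \<subseteq> Kset n x"
    proof
      fix k assume "k \<in> {..<nat \<lceil>y\<rceil>}"
      then have "int k < \<lceil>y\<rceil>" by auto
      then have "real k < y" using less_ceiling_iff[of "int k" y] by simp
      then show "k \<in> Kset n x" unfolding Kset_def y_def by auto
    qed
  qed
  then have c: "real (card (Kset n x)) = real_of_int \<lceil>y\<rceil>" using y1 by simp
  have "y \<le> real_of_int \<lceil>y\<rceil>" by (rule le_of_int_ceiling)
  moreover have "real_of_int \<lceil>y\<rceil> \<le> y + 1" by (rule of_int_ceiling_le_add_one)
  ultimately have "y \<le> real (card (Kset n x)) \<and> real (card (Kset n x)) \<le> 2 * y" using c y1 by linarith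
  then show ?thesis unfolding y_def .
qed

lemma log_Kset_lim:
  assumes x: "x \<ge> 0"
  shows "(\<lambda>n. log (real n) (real (card (Kset n x)))) \<longlonglongrightarrow> x"
proof (rule tendsto_sandwich[where f="\<lambda>n. x" and h="\<lambda>n. x + ln 2 / ln (real n)"])
  have l2: "(\<lambda>n. ln 2 / ln (real n)) \<longlonglongrightarrow> 0"
  proof -
    have "filterlim (\<lambda>n. ln (real n)) at_top sequentially"
      by (rule filterlim_compose[OF ln_at_top filterlim_real_sequentially])
    then show ?thesis by (rule tendsto_divide_0[OF tendsto_const filterlim_at_top_imp_at_infinity])
  qed
  have "(\<lambda>n. x + ln 2 / ln (real n)) \<longlonglongrightarrow> x + 0" by (intro tendsto_add tendsto_const l2)
  then show "(\<lambda>n. x + ln 2 / ln (real n)) \<longlonglongrightarrow> x" by simp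
  show "(\<lambda>n. x) \<longlonglongrightarrow> x" by simp
  have ev: "eventually (\<lambda>n::nat. n \<ge> 2) sequentially" by (rule eventually_ge_at_top)
  show "eventually (\<lambda>n. x \<le> log (real n) (real (card (Kset n x)))) sequentially"
    using ev
  proof (rule eventually_mono)
    fix n :: nat assume n: "n \<ge> 2"
    have b: "real n powr x \<le> real (card (Kset n x))" using Kset_bounds[of n x] n x by auto
    have p: "real n powr x > 0" using n by simp
    have cp: "real (card (Kset n x)) > 0" using b p by linarith
    have "x = log (real n) (real n powr x)" using n by simp
    also have "\<dots> \<le> log (real n) (real (card (Kset n x)))"
      using b p cp n by (subst log_le_cancel_iff) auto
    finally show "x \<le> log (real n) (real (card (Kset n x)))" .
  qed
  show "eventually (\<lambda>n. log (real n) (real (card (Kset n x))) \<le> x + ln 2 / ln (real n)) sequentially"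
    using ev
  proof (rule eventually_mono)
    fix n :: nat assume n: "n \<ge> 2"
    have b: "real n powr x \<le> real (card (Kset n x))" "real (card (Kset n x)) \<le> 2 * real n powr x"
      using Kset_bounds[of n x] n x by auto
    have p: "real n powr x > 0" using n by simp
    have cp: "real (card (Kset n x)) > 0" using b p by linarith
    have "log (real n) (real (card (Kset n x))) \<le> log (real n) (2 * real n powr x)"
      using b p cp n by (subst log_le_cancel_iff) auto
    also have "\<dots> = log (real n) 2 + x" using n p by (simp add: log_mult)
    also have "\<dots> = x + ln 2 / ln (real n)" by (simp add: log_def)
    finally show "log (real n) (real (card (Kset n x))) \<le> x + ln 2 / ln (real n)" .
  qed
qed

theorem lemma6p1:
  fixes VG :: "'a set" and EG :: "('a \<times> 'a) set"
    and VF :: "'b set" and EF :: "('b \<times> 'b) set"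
    and q :: "'a set \<Rightarrow> real" and \<phi> :: "'b \<Rightarrow> 'a"
  assumes "is_graph VG EG" and "is_graph VF EF"
    and "q \<in> Qset VG EG"
    and "\<phi> \<in> homs VF EF VG EG"
  shows "(\<lambda>n. log (real n) (real (hom_over VF EF VG EG q \<phi> n)))
           \<longlonglongrightarrow> (\<Sum>A\<in>Pow VG. q A * real (CC EF (\<phi> -` A \<inter> VF)))"
proof -
  have finG: "finite VG" and finF: "finite VF" and EFs: "EF \<subseteq> VF \<times> VF" using assms(1,2) unfolding is_graph_def by auto
  have qpos: "q A \<ge> 0" if "A \<in> Pow VG" for A using assms(3) that unfolding Qset_def by auto
  define c where "c A = CC EF (\<phi> -` A \<inter> VF)" for A
  define k where "k n A = card (Kset n (q A))" for n A
  have lim: "(\<lambda>n. \<Sum>A\<in>Pow VG. log (real n) (real (k n A)) * real (c A))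
      \<longlonglongrightarrow> (\<Sum>A\<in>Pow VG. q A * real (c A))"
    by (intro tendsto_sum tendsto_mult tendsto_const) (auto simp: k_def intro: log_Kset_lim qpos)
  have ev: "eventually (\<lambda>n::nat. n \<ge> 2) sequentially" by (rule eventually_ge_at_top)
  have "eventually (\<lambda>n. (\<Sum>A\<in>Pow VG. log (real n) (real (k n A)) * real (c A)) =
      log (real n) (real (hom_over VF EF VG EG q \<phi> n))) sequentially"
    using ev
  proof (rule eventually_mono)
    fix n :: nat assume n: "n \<ge> 2"
    have kpos: "real (k n A) > 0" if "A \<in> Pow VG" for A
    proof -
      have "real n powr q A \<ge> 1" using n qpos[OF that] by (intro ge_one_powr_ge_zero) auto
      then show ?thesis using Kset_bounds[of n "q A"] qpos[OF that] n unfolding k_def by linarith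
    qed
    have "real (hom_over VF EF VG EG q \<phi> n) = (\<Prod>A\<in>Pow VG. real (k n A) ^ c A)"
      unfolding count[OF assms(4) finG finF EFs] k_def c_def by simp
    then have "log (real n) (real (hom_over VF EF VG EG q \<phi> n))
        = ln (\<Prod>A\<in>Pow VG. real (k n A) ^ c A) / ln (real n)" by (simp add: log_def)
    also have "ln (\<Prod>A\<in>Pow VG. real (k n A) ^ c A) = (\<Sum>A\<in>Pow VG. ln (real (k n A) ^ c A))"
      using kpos finG by (intro ln_prod) auto
    also have "\<dots> = (\<Sum>A\<in>Pow VG. real (c A) * ln (real (k n A)))"
      by (simp add: ln_realpow)
    finally show "(\<Sum>A\<in>Pow VG. log (real n) (real (k n A)) * real (c A)) =
      log (real n) (real (hom_over VF EF VG EG q \<phi> n))"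
      by (simp add: log_def sum_divide_distrib mult.commute)
  qed
  from Lim_transform_eventually[OF lim this] show ?thesis unfolding c_def .
qed

end
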